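(* There exists an absolute constant $c>0$ such that for every positive integer $n$ there is a set $S \subset [n]^2 = \{1,\dots,n\}^2$ with $|S| \ge c\, n^{5/4}$ which is skew corner-free, i.e. $S$ contains no three points of the form $$(x,y),\ (x,y+d),\ (x+d,y')$$ with $x,y,y'$ integers and $d \neq 0$ an integer.
   Context: A triple of points of the form $(x,y),(x,y+d),(x+d,y')$ with $d\neq 0$ (and $x,y,y'$ arbitrary) is called a skew corner; a set is skew corner-free if it contains no skew corner (all three points lying in the set). *)

theory Defs
  imports Complex_Main
begin

definition skew_corner_free :: "(int \<times> int) set \<Rightarrow> bool" where
  "skew_corner_free S \<longleftrightarrow>
     \<not> (\<exists>x y y' d. d \<noteq> 0 \<and> (x, y) \<in> S \<and> (x, y + d) \<in> S \<and> (x + d, y') \<in> S)"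

end

theory Submission
  imports Defs
begin

definition cols :: "(int \<times> int list) list" where
"cols = [(0,[0,4,8,12,16,20,24,28,32,36]), (1,[0,3,8,11,16,19,24,27,32,35]),
 (2,[0,4,10,14,20,24,30,34]), (3,[0,5,10,15,21,26,31]), (5,[0,1,8,9,20,21,28,29]),
 (7,[0,1,10,11,20,21,30,31]), (10,[0,2,4,6,18,20,22,24]), (11,[0,2,5,7,21,23,26]),
 (15,[0,1,2,3,20,21,22,23]), (21,[0,1,4,5,8,9,13,36]), (23,[0,1,4,5,10,11,15]),
 (31,[0,1,2,3,4,5,6,7]), (39,[0,5,10,15,20,25,30,35])]"

definition Glist :: "(int\<times>int) list" where
"Glist = concat (map (\<lambda>(c,bs). map (\<lambda>b. (c,b)) bs) cols)"

definition chk :: bool where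
"chk = list_all (\<lambda>(c,bs). list_all (\<lambda>b. list_all (\<lambda>b'. list_all (\<lambda>c'. c' = c \<or> (b' - b) mod 40 \<noteq> (c' - c) mod 40) (map fst cols)) bs) bs) cols"

lemma chk: chk
  by code_simp

lemma dist: "distinct Glist \<and> length Glist = 105"
  by code_simp

lemma dist_keys: "distinct (map fst cols)"
  by code_simp

lemma rng_chk: "list_all (\<lambda>(c,b). 0 \<le> c \<and> c < 40 \<and> 0 \<le> b \<and> b < 40) Glist"
  by code_simp

lemma G_mem: "(c,b) \<in> set Glist \<longleftrightarrow> (\<exists>bs. (c,bs) \<in> set cols \<and> b \<in> set bs)"
  unfolding Glist_def by auto

lemma G_range: "(c,b) \<in> set Glist \<Longrightarrow> 0 \<le> c \<and> c < 40 \<and> 0 \<le> b \<and> b < 40"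
  using rng_chk by (auto simp: list_all_iff)

lemma gadget:
  assumes "(r,s1) \<in> set Glist" "(r,s2) \<in> set Glist" "(r3,t) \<in> set Glist"
    and "(s2 - s1) mod 40 = (r3 - r) mod 40"
  shows "r3 = r"
proof -
  obtain bs where b1: "(r,bs) \<in> set cols" "s1 \<in> set bs" using assms(1) G_mem by blast
  obtain bs' where b2: "(r,bs') \<in> set cols" "s2 \<in> set bs'" using assms(2) G_mem by blast
  obtain bs3 where b3: "(r3,bs3) \<in> set cols" using assms(3) G_mem by blast
  have "bs' = bs" using dist_keys b1 b2 by (metis eq_key_imp_eq_value)
  hence s2: "s2 \<in> set bs" using b2 by simp
  have r3: "r3 \<in> set (map fst cols)" using b3 by force
  have "\<forall>(c,bs)\<in>set cols. \<forall>b\<in>set bs. \<forall>b'\<in>set bs. \<forall>c'\<in>set (map fst cols).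
          c' = c \<or> (b' - b) mod 40 \<noteq> (c' - c) mod 40"
    using chk unfolding chk_def by (simp add: list_all_iff)
  then have "r3 = r \<or> (s2 - s1) mod 40 \<noteq> (r3 - r) mod 40"
    using b1 s2 r3 by fastforce
  then show ?thesis using assms(4) by blast
qed

lemma decomp:
  fixes r r' u u' :: int
  assumes "0 \<le> r" "r < 40" "0 \<le> r'" "r' < 40" "r + 40*u = r' + 40*u'"
  shows "r = r' \<and> u = u'"
proof -
  have "(r + 40*u) mod 40 = r" using assms(1,2) by simp
  moreover have "(r' + 40*u') mod 40 = r'" using assms(3,4) by simp
  ultimately have rr: "r = r'" using assms(5) by simp
  then show ?thesis using assms(5) by simp
qed

fun S :: "nat \<Rightarrow> (int\<times>int) set" where
  "S 0 = {(0,0)}"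
| "S (Suc k) = (\<lambda>((r,s),(u,w)). (r + 40*u, s + 40*w)) ` (set Glist \<times> S k)"

lemma S_range: "(x,y) \<in> S k \<Longrightarrow> 0 \<le> x \<and> x < 40^k \<and> 0 \<le> y \<and> y < 40^k"
proof (induction k arbitrary: x y)
  case 0
  then show ?case by simp
next
  case (Suc k)
  then obtain r s u w where e: "x = r + 40*u" "y = s + 40*w" "(r,s) \<in> set Glist" "(u,w) \<in> S k"
    by auto
  from G_range[OF e(3)] have g: "0 \<le> r" "r < 40" "0 \<le> s" "s < 40" by auto
  from Suc.IH[OF e(4)] have h: "0 \<le> u" "u < 40^k" "0 \<le> w" "w < 40^k" by auto
  have "u \<le> 40^k - 1" "w \<le> 40^k - 1" using h by auto
  then have "40*u \<le> 40*40^k - 40" "40*w \<le> 40*40^k - 40" by auto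
  then show ?case using e g h by auto
qed

lemma S_card: "finite (S k) \<and> card (S k) = 105^k"
proof (induction k)
  case 0
  then show ?case by simp
next
  case (Suc k)
  have inj: "inj_on (\<lambda>((r,s),(u,w)). (r + 40*u, s + 40*(w::int))) (set Glist \<times> S k)"
  proof (rule inj_onI, clarsimp)
    fix r s u w r' s' u' w'
    assume a: "(r,s) \<in> set Glist" "(u,w) \<in> S k" "(r',s') \<in> set Glist" "(u',w') \<in> S k"
      "r + 40*u = r' + 40*u'" "s + 40*w = s' + 40*w'"
    from G_range[OF a(1)] G_range[OF a(3)] decomp[OF _ _ _ _ a(5)] decomp[OF _ _ _ _ a(6)]
    show "r = r' \<and> s = s' \<and> u = u' \<and> w = w'" by auto
  qed
  have "card (set Glist) = 105" using dist by (simp add: distinct_card)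
  then show ?case using Suc inj by (simp add: card_image card_cartesian_product)
qed

lemma S_free: "skew_corner_free (S k)"
proof (induction k)
  case 0
  then show ?case by (simp add: skew_corner_free_def)
next
  case (Suc k)
  show ?case unfolding skew_corner_free_def
  proof
    assume "\<exists>x y y' d. d \<noteq> 0 \<and> (x, y) \<in> S (Suc k) \<and> (x, y + d) \<in> S (Suc k) \<and> (x + d, y') \<in> S (Suc k)"
    then obtain x y y' d where d: "d \<noteq> 0" and p1: "(x, y) \<in> S (Suc k)"
      and p2: "(x, y + d) \<in> S (Suc k)" and p3: "(x + d, y') \<in> S (Suc k)" by blast
    from p1 obtain r1 s1 u1 w1 where e1: "x = r1 + 40*u1" "y = s1 + 40*w1" "(r1,s1) \<in> set Glist" "(u1,w1) \<in> S k"
      by auto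
    from p2 obtain r2 s2 u2 w2 where e2: "x = r2 + 40*u2" "y + d = s2 + 40*w2" "(r2,s2) \<in> set Glist" "(u2,w2) \<in> S k"
      by auto
    from p3 obtain r3 s3 u3 w3 where e3: "x + d = r3 + 40*u3" "y' = s3 + 40*w3" "(r3,s3) \<in> set Glist" "(u3,w3) \<in> S k"
      by auto
    from G_range[OF e1(3)] G_range[OF e2(3)] G_range[OF e3(3)]
    have g: "0 \<le> r1" "r1 < 40" "0 \<le> s1" "s1 < 40" "0 \<le> r2" "r2 < 40" "0 \<le> s2" "s2 < 40"
      "0 \<le> r3" "r3 < 40" by auto
    have "r1 = r2 \<and> u1 = u2" using decomp[of r1 r2 u1 u2] g e1(1) e2(1) by simp
    then have ru: "r2 = r1" "u2 = u1" by auto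
    have dd1: "d = (s2 - s1) + 40*(w2 - w1)" using e1(2) e2(2) by (simp add: algebra_simps)
    have dd2: "d = (r3 - r1) + 40*(u3 - u1)" using e1(1) e3(1) by (simp add: algebra_simps)
    have "(s2 - s1) mod 40 = d mod 40" unfolding dd1 by (simp only: mod_mult_self2)
    moreover have "(r3 - r1) mod 40 = d mod 40" unfolding dd2 by (simp only: mod_mult_self2)
    ultimately have "(s2 - s1) mod 40 = (r3 - r1) mod 40" by simp
    moreover have "(r1,s2) \<in> set Glist" using e2(3) ru by simp
    ultimately have r3: "r3 = r1" using gadget[OF e1(3) _ e3(3)] by blast
    then have "(s2 - s1) mod 40 = 0" using \<open>(s2 - s1) mod 40 = (r3 - r1) mod 40\<close> by simp
    then have "s2 = s1" using g by (smt (verit) mod_pos_pos_trivial minus_mod_self1 mod_add_self2 zmod_zminus1_not_zero)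
    then have "40*(w2 - w1) = 40*(u3 - u1)" using dd1 dd2 r3 by simp
    then have eq: "w2 - w1 = u3 - u1" by simp
    define d' where "d' = w2 - w1"
    have "d' \<noteq> 0" using dd1 \<open>s2 = s1\<close> d d'_def by simp
    moreover have "(u1, w1 + d') \<in> S k" using e2(4) ru d'_def by simp
    moreover have "(u1 + d', w3) \<in> S k" using e3(4) eq d'_def by simp
    ultimately show False using Suc.IH e1(4) unfolding skew_corner_free_def by blast
  qed
qed


definition T :: "nat \<Rightarrow> (int\<times>int) set" where
  "T k = (\<lambda>(x,y). (x+1, y+1)) ` S k"

lemma T_props: "T k \<subseteq> {1..(40::int)^k} \<times> {1..(40::int)^k} \<and> skew_corner_free (T k) \<and> card (T k) = 105^k"
proof -
  have inj: "inj_on (\<lambda>(x,y). (x+1, (y::int)+1)) (S k)" by (rule inj_onI) auto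
  have c: "card (T k) = 105^k" unfolding T_def using S_card inj by (simp add: card_image)
  have sub: "T k \<subseteq> {1..(40::int)^k} \<times> {1..(40::int)^k}"
    unfolding T_def using S_range by fastforce
  have fr: "skew_corner_free (T k)"
    unfolding skew_corner_free_def
  proof
    assume "\<exists>x y y' d. d \<noteq> 0 \<and> (x, y) \<in> T k \<and> (x, y + d) \<in> T k \<and> (x + d, y') \<in> T k"
    then obtain x y y' d where d: "d \<noteq> 0" "(x, y) \<in> T k" "(x, y + d) \<in> T k" "(x + d, y') \<in> T k"
      by blast
    have m: "\<And>a b. (a,b) \<in> T k \<Longrightarrow> (a - 1, b - 1) \<in> S k" unfolding T_def by auto
    have "(x - 1, y - 1) \<in> S k" "(x - 1, (y - 1) + d) \<in> S k" "((x - 1) + d, y' - 1) \<in> S k"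
      using m[OF d(2)] m[OF d(3)] m[OF d(4)] by (simp_all add: algebra_simps)
    then show False using S_free[of k] d(1) unfolding skew_corner_free_def by blast
  qed
  show ?thesis using c sub fr by blast
qed

lemma ex_k: "(n::nat) \<ge> 1 \<Longrightarrow> \<exists>k. 40^k \<le> n \<and> n < 40^(Suc k)"
proof (induction n rule: less_induct)
  case (less n)
  show ?case
  proof (cases "n < 40")
    case True
    then show ?thesis using less.prems by (intro exI[of _ 0]) auto
  next
    case False
    then have "n div 40 \<ge> 1" "n div 40 < n" by auto
    then obtain k where k: "40^k \<le> n div 40" "n div 40 < 40^(Suc k)" using less.IH by blast
    have nn: "n = 40*(n div 40) + n mod 40" by simp
    have "n mod 40 < 40" by simp
    have "40*40^k \<le> 40*(n div 40)" using k(1) by simp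
    then have "40^(Suc k) \<le> n" using nn by simp
    moreover have "n div 40 + 1 \<le> 40^(Suc k)" using k(2) by simp
    then have "40*(n div 40) + 40 \<le> 40*40^(Suc k)" by simp
    then have "n < 40^(Suc (Suc k))" using nn \<open>n mod 40 < 40\<close> by simp
    ultimately show ?thesis by blast
  qed
qed

lemma base_bound: "(40::real) powr (5/4) \<le> 105"
proof -
  have "((40::real) powr (5/4))^4 = 40 powr (5/4 * 4)"
    by (simp add: powr_realpow[symmetric] powr_powr)
  also have "\<dots> = 40^5" by (simp add: powr_realpow[symmetric])
  also have "\<dots> \<le> (105::real)^4" by simp
  finally have h: "((40::real) powr (5/4))^4 \<le> 105^4" .
  show ?thesis by (rule power_le_imp_le_base[where n=3]) (use h in simp_all)
qed

theorem theorem1p1: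
  shows "\<exists>c::real. c > 0 \<and> (\<forall>n::nat. n \<ge> 1 \<longrightarrow>
     (\<exists>S. S \<subseteq> {1..int n} \<times> {1..int n} \<and> skew_corner_free S \<and>
          real (card S) \<ge> c * real n powr (5/4)))"
proof (intro exI[of _ "1 / (40 powr (5/4))"] conjI allI impI)
  show "(0::real) < 1 / 40 powr (5 / 4)" by simp
  fix n :: nat assume n: "n \<ge> 1"
  obtain k where k: "40^k \<le> n" "n < 40^(Suc k)" using ex_k[OF n] by blast
  let ?a = "(40::real) powr (5/4)"
  have sub: "T k \<subseteq> {1..int n} \<times> {1..int n}"
  proof -
    have "(40::int)^k \<le> int n" using k(1) by (metis of_nat_le_iff of_nat_numeral of_nat_power)
    then have "{1..(40::int)^k} \<times> {1..(40::int)^k} \<subseteq> {1..int n} \<times> {1..int n}"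
      by (intro Sigma_mono) (auto intro: order_trans)
    then show ?thesis using T_props[of k] by (meson order_trans)
  qed
  have "real n powr (5/4) \<le> (real (40^(Suc k))) powr (5/4)"
  proof -
    have rn: "real n \<le> real ((40::nat)^(Suc k))" using k(2) by (subst of_nat_le_iff) simp
    show ?thesis by (rule powr_mono2) (use rn in auto)
  qed
  also have "(real (40^(Suc k))) powr (5/4) = ?a^(Suc k)"
  proof -
    have "(real (40^(Suc k))) = 40 powr (real (Suc k))" using powr_realpow[of "40::real" "Suc k"] by simp
    then have "(real (40^(Suc k))) powr (5/4) = 40 powr (real (Suc k) * (5/4))" by (simp add: powr_powr)
    also have "\<dots> = ?a powr (real (Suc k))" by (simp add: powr_powr mult.commute)
    also have "\<dots> = ?a^(Suc k)" using powr_realpow[of ?a "Suc k"] by simp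
    finally show ?thesis .
  qed
  finally have le: "real n powr (5/4) \<le> ?a^(Suc k)" .
  have apos: "?a > 0" by simp
  have "1 / ?a * real n powr (5/4) \<le> 1 / ?a * ?a^(Suc k)"
    using le apos by (intro mult_left_mono) auto
  also have "\<dots> = ?a^k" using apos by simp
  also have "\<dots> \<le> 105^k" using base_bound by (intro power_mono) auto
  also have "\<dots> = real (card (T k))" using T_props[of k] by simp
  finally show "\<exists>S. S \<subseteq> {1..int n} \<times> {1..int n} \<and> skew_corner_free S \<and>
          real (card S) \<ge> 1 / ?a * real n powr (5/4)"
    using sub T_props[of k] by blast
qed

end
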